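(* Let $(H,\mu,\eta,\Delta,\varepsilon,s)$ be a Hopf algebra in a strict symmetric monoidal category $\mathcal{C}$ which admits a Hopf-Frobenius algebra structure. Then this structure is unique up to invertible scalar: if $(\delta_g,\varepsilon_g,\mu_r,\eta_r)$ and $(\delta_g',\varepsilon_g',\mu_r',\eta_r')$ are two choices of green comonoid and red monoid which, together with green monoid $(\mu,\eta)$, red comonoid $(\Delta,\varepsilon)$ and antipode $s$, form Hopf-Frobenius algebras, then each of $\delta_g',\varepsilon_g',\mu_r',\eta_r'$ is equal to the corresponding morphism $\delta_g,\varepsilon_g,\mu_r,\eta_r$ tensored with some invertible scalar $I\to I$.
   Context: $\mathcal{C}$ is a strict symmetric monoidal category with unit object $I$ and symmetry $\sigma$; scalars are morphisms $I\to I$. A Hopf algebra $(H,\mu,\eta,\Delta,\varepsilon,s)$: an object $H$ with an associative unital monoid $(\mu,\eta)$ and coassociative counital comonoid $(\Delta,\varepsilon)$ satisfying $\Delta\circ\mu=(\mu\otimes\mu)\circ(\mathrm{id}\otimes\sigma_{H,H}\otimes\mathrm{id})\circ(\Delta\otimes\Delta)$, $\Delta\circ\eta=\eta\otimes\eta$, $\varepsilon\circ\mu=\varepsilon\otimes\varepsilon$, $\varepsilon\circ\eta=\mathrm{id}_I$, and an antipode $s$ with $\mu\circ(s\otimes\mathrm{id})\circ\Delta=\eta\circ\varepsilon=\mu\circ(\mathrm{id}\otimes s)\circ\Delta$. A Frobenius algebra is a monoid $(m,u)$ and comonoid $(d,c)$ on the same object with $(\mathrm{id}\otimes m)\circ(d\otimes\mathrm{id})=d\circ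 m=(m\otimes\mathrm{id})\circ(\mathrm{id}\otimes d)$. A pre-Hopf-Frobenius algebra consists of an object $H$ with a green monoid $(\mu_g,\eta_g)$, green comonoid $(\delta_g,\varepsilon_g)$, red monoid $(\mu_r,\eta_r)$, red comonoid $(\delta_r,\varepsilon_r)$ and an endomorphism $s$ such that $(\mu_g,\eta_g,\delta_g,\varepsilon_g)$ and $(\mu_r,\eta_r,\delta_r,\varepsilon_r)$ are Frobenius algebras and $(\mu_g,\eta_g,\delta_r,\varepsilon_r,s)$ is a Hopf algebra. Write $e_g:=\varepsilon_g\circ\mu_g$, $d_g:=\delta_g\circ\eta_g$ (green cup and cap) and $e_r:=\varepsilon_r\circ\mu_r$, $d_r:=\delta_r\circ\eta_r$ (red cup and cap). A Hopf-Frobenius algebra is a pre-Hopf-Frobenius algebra such that $s=(\mathrm{id}_H\otimes e_r)\circ(d_g\otimes\mathrm{id}_H)$ and such that, with $s':=(e_g\otimes\mathrm{id}_H)\circ(\mathrm{id}_H\otimes d_r)$, the tuple $(\mu_r,\eta_r,\delta_g,\varepsilon_g,s')$ is a Hopf algebra. A Hopf algebra $(H,\mu,\eta,\Delta,\varepsilon,s)$ admits a Hopf-Frobenius algebra structure if there exist $\delta_g,\varepsilon_g,\mu_r,\eta_r$ such that the data with green monoid $(\mu,\eta)$, red comonoid $(\Delta,\varepsilon)$ and antipode $s$ is a Hopf-Frobenius algebra. *)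

theory Defs
  imports Main
begin

text \<open>Composition: mc_cmp C g f is g after f.\<close>

record ('o, 'm) smcat =
  mc_ob  :: "'o set"
  mc_ar  :: "'m set"
  mc_src :: "'m \<Rightarrow> 'o"
  mc_tgt :: "'m \<Rightarrow> 'o"
  mc_idm :: "'o \<Rightarrow> 'm"
  mc_cmp :: "'m \<Rightarrow> 'm \<Rightarrow> 'm"
  mc_tob :: "'o \<Rightarrow> 'o \<Rightarrow> 'o"
  mc_tar :: "'m \<Rightarrow> 'm \<Rightarrow> 'm"
  mc_unt :: "'o"
  mc_sym :: "'o \<Rightarrow> 'o \<Rightarrow> 'm"

abbreviation mc_comp :: "'m \<Rightarrow> ('o,'m) smcat \<Rightarrow> 'm \<Rightarrow> 'm"
  ("(_ \<cdot>\<^bsub>_\<^esub>/ _)" [70, 0, 71] 70) where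
  "g \<cdot>\<^bsub>C\<^esub> f \<equiv> mc_cmp C g f"

abbreviation mc_tens :: "'m \<Rightarrow> ('o,'m) smcat \<Rightarrow> 'm \<Rightarrow> 'm"
  ("(_ \<otimes>\<^bsub>_\<^esub>/ _)" [75, 0, 76] 75) where
  "f \<otimes>\<^bsub>C\<^esub> g \<equiv> mc_tar C f g"

definition mc_hom :: "('o,'m) smcat \<Rightarrow> 'm \<Rightarrow> 'o \<Rightarrow> 'o \<Rightarrow> bool" where
  "mc_hom C f a b \<longleftrightarrow> f \<in> mc_ar C \<and> mc_src C f = a \<and> mc_tgt C f = b"

definition strict_smc :: "('o,'m) smcat \<Rightarrow> bool" where
  "strict_smc C \<longleftrightarrow>
    \<comment> \<open>category\<close>
    (\<forall>f \<in> mc_ar C. mc_src C f \<in> mc_ob C \<and> mc_tgt C f \<in> mc_ob C) \<and>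
    (\<forall>a \<in> mc_ob C. mc_hom C (mc_idm C a) a a) \<and>
    (\<forall>f g. f \<in> mc_ar C \<and> g \<in> mc_ar C \<and> mc_tgt C f = mc_src C g \<longrightarrow>
        mc_hom C (mc_cmp C g f) (mc_src C f) (mc_tgt C g)) \<and>
    (\<forall>f g h. f \<in> mc_ar C \<and> g \<in> mc_ar C \<and> h \<in> mc_ar C \<and>
        mc_tgt C f = mc_src C g \<and> mc_tgt C g = mc_src C h \<longrightarrow>
        mc_cmp C h (mc_cmp C g f) = mc_cmp C (mc_cmp C h g) f) \<and>
    (\<forall>f \<in> mc_ar C. mc_cmp C (mc_idm C (mc_tgt C f)) f = f \<and>
                    mc_cmp C f (mc_idm C (mc_src C f)) = f) \<and>
    \<comment> \<open>tensor is a bifunctor\<close>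
    (\<forall>a \<in> mc_ob C. \<forall>b \<in> mc_ob C. mc_tob C a b \<in> mc_ob C) \<and>
    (\<forall>f \<in> mc_ar C. \<forall>g \<in> mc_ar C. mc_hom C (mc_tar C f g)
        (mc_tob C (mc_src C f) (mc_src C g)) (mc_tob C (mc_tgt C f) (mc_tgt C g))) \<and>
    (\<forall>a \<in> mc_ob C. \<forall>b \<in> mc_ob C.
        mc_tar C (mc_idm C a) (mc_idm C b) = mc_idm C (mc_tob C a b)) \<and>
    (\<forall>f g f' g'. f \<in> mc_ar C \<and> g \<in> mc_ar C \<and> f' \<in> mc_ar C \<and> g' \<in> mc_ar C \<and>
        mc_tgt C f = mc_src C g \<and> mc_tgt C f' = mc_src C g' \<longrightarrow>
        mc_tar C (mc_cmp C g f) (mc_cmp C g' f') =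
        mc_cmp C (mc_tar C g g') (mc_tar C f f')) \<and>
    \<comment> \<open>strictness\<close>
    mc_unt C \<in> mc_ob C \<and>
    (\<forall>a \<in> mc_ob C. \<forall>b \<in> mc_ob C. \<forall>c \<in> mc_ob C.
        mc_tob C (mc_tob C a b) c = mc_tob C a (mc_tob C b c)) \<and>
    (\<forall>a \<in> mc_ob C. mc_tob C (mc_unt C) a = a \<and> mc_tob C a (mc_unt C) = a) \<and>
    (\<forall>f \<in> mc_ar C. \<forall>g \<in> mc_ar C. \<forall>h \<in> mc_ar C.
        mc_tar C (mc_tar C f g) h = mc_tar C f (mc_tar C g h)) \<and>
    (\<forall>f \<in> mc_ar C. mc_tar C (mc_idm C (mc_unt C)) f = f \<and>
                    mc_tar C f (mc_idm C (mc_unt C)) = f) \<and>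
    \<comment> \<open>symmetry\<close>
    (\<forall>a \<in> mc_ob C. \<forall>b \<in> mc_ob C.
        mc_hom C (mc_sym C a b) (mc_tob C a b) (mc_tob C b a)) \<and>
    (\<forall>f \<in> mc_ar C. \<forall>g \<in> mc_ar C.
        mc_cmp C (mc_tar C g f) (mc_sym C (mc_src C f) (mc_src C g)) =
        mc_cmp C (mc_sym C (mc_tgt C f) (mc_tgt C g)) (mc_tar C f g)) \<and>
    (\<forall>a \<in> mc_ob C. \<forall>b \<in> mc_ob C.
        mc_cmp C (mc_sym C b a) (mc_sym C a b) = mc_idm C (mc_tob C a b)) \<and>
    (\<forall>a \<in> mc_ob C. \<forall>b \<in> mc_ob C. \<forall>c \<in> mc_ob C.
        mc_sym C a (mc_tob C b c) =
        mc_cmp C (mc_tar C (mc_idm C b) (mc_sym C a c))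
                 (mc_tar C (mc_sym C a b) (mc_idm C c)))"

definition is_monoid :: "('o,'m) smcat \<Rightarrow> 'o \<Rightarrow> 'm \<Rightarrow> 'm \<Rightarrow> bool" where
  "is_monoid C H m u \<longleftrightarrow>
    (let i = mc_idm C H in
     H \<in> mc_ob C \<and> mc_hom C m (mc_tob C H H) H \<and> mc_hom C u (mc_unt C) H \<and>
     m \<cdot>\<^bsub>C\<^esub> (m \<otimes>\<^bsub>C\<^esub> i) = m \<cdot>\<^bsub>C\<^esub> (i \<otimes>\<^bsub>C\<^esub> m) \<and>
     m \<cdot>\<^bsub>C\<^esub> (u \<otimes>\<^bsub>C\<^esub> i) = i \<and> m \<cdot>\<^bsub>C\<^esub> (i \<otimes>\<^bsub>C\<^esub> u) = i)"

definition is_comonoid :: "('o,'m) smcat \<Rightarrow> 'o \<Rightarrow> 'm \<Rightarrow> 'm \<Rightarrow> bool" where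
  "is_comonoid C H d e \<longleftrightarrow>
    (let i = mc_idm C H in
     H \<in> mc_ob C \<and> mc_hom C d H (mc_tob C H H) \<and> mc_hom C e H (mc_unt C) \<and>
     (d \<otimes>\<^bsub>C\<^esub> i) \<cdot>\<^bsub>C\<^esub> d = (i \<otimes>\<^bsub>C\<^esub> d) \<cdot>\<^bsub>C\<^esub> d \<and>
     (e \<otimes>\<^bsub>C\<^esub> i) \<cdot>\<^bsub>C\<^esub> d = i \<and> (i \<otimes>\<^bsub>C\<^esub> e) \<cdot>\<^bsub>C\<^esub> d = i)"

definition is_frobenius :: "('o,'m) smcat \<Rightarrow> 'o \<Rightarrow> 'm \<Rightarrow> 'm \<Rightarrow> 'm \<Rightarrow> 'm \<Rightarrow> bool" where
  "is_frobenius C H m u d e \<longleftrightarrow>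
    (let i = mc_idm C H in
     is_monoid C H m u \<and> is_comonoid C H d e \<and>
     (i \<otimes>\<^bsub>C\<^esub> m) \<cdot>\<^bsub>C\<^esub> (d \<otimes>\<^bsub>C\<^esub> i) = d \<cdot>\<^bsub>C\<^esub> m \<and>
     d \<cdot>\<^bsub>C\<^esub> m = (m \<otimes>\<^bsub>C\<^esub> i) \<cdot>\<^bsub>C\<^esub> (i \<otimes>\<^bsub>C\<^esub> d))"

definition is_hopf :: "('o,'m) smcat \<Rightarrow> 'o \<Rightarrow> 'm \<Rightarrow> 'm \<Rightarrow> 'm \<Rightarrow> 'm \<Rightarrow> 'm \<Rightarrow> bool" where
  "is_hopf C H m u d e s \<longleftrightarrow>
    (let i = mc_idm C H in
     is_monoid C H m u \<and> is_comonoid C H d e \<and> mc_hom C s H H \<and>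
     d \<cdot>\<^bsub>C\<^esub> m = (m \<otimes>\<^bsub>C\<^esub> m) \<cdot>\<^bsub>C\<^esub> (i \<otimes>\<^bsub>C\<^esub> mc_sym C H H \<otimes>\<^bsub>C\<^esub> i) \<cdot>\<^bsub>C\<^esub> (d \<otimes>\<^bsub>C\<^esub> d) \<and>
     d \<cdot>\<^bsub>C\<^esub> u = u \<otimes>\<^bsub>C\<^esub> u \<and>
     e \<cdot>\<^bsub>C\<^esub> m = e \<otimes>\<^bsub>C\<^esub> e \<and>
     e \<cdot>\<^bsub>C\<^esub> u = mc_idm C (mc_unt C) \<and>
     m \<cdot>\<^bsub>C\<^esub> (s \<otimes>\<^bsub>C\<^esub> i) \<cdot>\<^bsub>C\<^esub> d = u \<cdot>\<^bsub>C\<^esub> e \<and>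
     m \<cdot>\<^bsub>C\<^esub> (i \<otimes>\<^bsub>C\<^esub> s) \<cdot>\<^bsub>C\<^esub> d = u \<cdot>\<^bsub>C\<^esub> e)"

text \<open>Pre-Hopf-Frobenius and Hopf-Frobenius algebras.  Argument order:
green monoid (mu_g, eta_g), green comonoid (delta_g, eps_g),
red monoid (mu_r, eta_r), red comonoid (delta_r, eps_r), antipode s.\<close>

definition pre_hopf_frobenius ::
  "('o,'m) smcat \<Rightarrow> 'o \<Rightarrow> 'm \<Rightarrow> 'm \<Rightarrow> 'm \<Rightarrow> 'm \<Rightarrow> 'm \<Rightarrow> 'm \<Rightarrow> 'm \<Rightarrow> 'm \<Rightarrow> 'm \<Rightarrow> bool" where
  "pre_hopf_frobenius C H mug etag dg eg mur etar dr er s \<longleftrightarrow>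
    is_frobenius C H mug etag dg eg \<and> is_frobenius C H mur etar dr er \<and>
    is_hopf C H mug etag dr er s"

definition hopf_frobenius ::
  "('o,'m) smcat \<Rightarrow> 'o \<Rightarrow> 'm \<Rightarrow> 'm \<Rightarrow> 'm \<Rightarrow> 'm \<Rightarrow> 'm \<Rightarrow> 'm \<Rightarrow> 'm \<Rightarrow> 'm \<Rightarrow> 'm \<Rightarrow> bool" where
  "hopf_frobenius C H mug etag dg eg mur etar dr er s \<longleftrightarrow>
    (let i = mc_idm C H;
         cup_g = eg \<cdot>\<^bsub>C\<^esub> mug; cap_g = dg \<cdot>\<^bsub>C\<^esub> etag;
         cup_r = er \<cdot>\<^bsub>C\<^esub> mur; cap_r = dr \<cdot>\<^bsub>C\<^esub> etar;
         s' = (cup_g \<otimes>\<^bsub>C\<^esub> i) \<cdot>\<^bsub>C\<^esub> (i \<otimes>\<^bsub>C\<^esub> cap_r) in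
     pre_hopf_frobenius C H mug etag dg eg mur etar dr er s \<and>
     s = (i \<otimes>\<^bsub>C\<^esub> cup_r) \<cdot>\<^bsub>C\<^esub> (cap_g \<otimes>\<^bsub>C\<^esub> i) \<and>
     is_hopf C H mur etar dg eg s')"

definition invertible_scalar :: "('o,'m) smcat \<Rightarrow> 'm \<Rightarrow> bool" where
  "invertible_scalar C l \<longleftrightarrow> mc_hom C l (mc_unt C) (mc_unt C) \<and>
    (\<exists>l'. mc_hom C l' (mc_unt C) (mc_unt C) \<and>
          mc_cmp C l l' = mc_idm C (mc_unt C) \<and> mc_cmp C l' l = mc_idm C (mc_unt C))"

end

theory Submission
  imports Defs
begin


locale smc = fixes C :: "('o,'m) smcat" assumes smc: "strict_smc C"
begin

abbreviation "ar \<equiv> mc_ar C"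
abbreviation "ob \<equiv> mc_ob C"
abbreviation "src \<equiv> mc_src C"
abbreviation "tgt \<equiv> mc_tgt C"
abbreviation "idm \<equiv> mc_idm C"
abbreviation "U \<equiv> mc_unt C"
abbreviation "tob \<equiv> mc_tob C"
abbreviation cp (infixr "\<bullet>" 55) where "g \<bullet> f \<equiv> mc_cmp C g f"
abbreviation tn (infixr "\<odot>" 65) where "f \<odot> g \<equiv> mc_tar C f g"

lemma src_ob[simp]: "f \<in> ar \<Longrightarrow> src f \<in> ob" and tgt_ob[simp]: "f \<in> ar \<Longrightarrow> tgt f \<in> ob"
  using smc unfolding strict_smc_def by auto

lemma id_ar[simp]: "a \<in> ob \<Longrightarrow> idm a \<in> ar" and id_src[simp]: "a \<in> ob \<Longrightarrow> src (idm a) = a"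
  and id_tgt[simp]: "a \<in> ob \<Longrightarrow> tgt (idm a) = a"
  using smc unfolding strict_smc_def mc_hom_def by auto

lemma cp_ar[simp]: "f \<in> ar \<Longrightarrow> g \<in> ar \<Longrightarrow> tgt f = src g \<Longrightarrow> g \<bullet> f \<in> ar"
  and cp_src[simp]: "f \<in> ar \<Longrightarrow> g \<in> ar \<Longrightarrow> tgt f = src g \<Longrightarrow> src (g \<bullet> f) = src f"
  and cp_tgt[simp]: "f \<in> ar \<Longrightarrow> g \<in> ar \<Longrightarrow> tgt f = src g \<Longrightarrow> tgt (g \<bullet> f) = tgt g"
  using smc unfolding strict_smc_def mc_hom_def by auto

lemma cp_assoc: "f \<in> ar \<Longrightarrow> g \<in> ar \<Longrightarrow> h \<in> ar \<Longrightarrow> tgt f = src g \<Longrightarrow> tgt g = src h \<Longrightarrow>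
   (h \<bullet> g) \<bullet> f = h \<bullet> (g \<bullet> f)"
  using smc unfolding strict_smc_def by metis

lemma id_l: "f \<in> ar \<Longrightarrow> tgt f = a \<Longrightarrow> idm a \<bullet> f = f"
  and id_r: "f \<in> ar \<Longrightarrow> src f = a \<Longrightarrow> f \<bullet> idm a = f"
  using smc unfolding strict_smc_def by auto

lemma tob_ob[simp]: "a \<in> ob \<Longrightarrow> b \<in> ob \<Longrightarrow> tob a b \<in> ob"
  using smc unfolding strict_smc_def by auto

lemma tn_ar[simp]: "f \<in> ar \<Longrightarrow> g \<in> ar \<Longrightarrow> f \<odot> g \<in> ar"
  and tn_src[simp]: "f \<in> ar \<Longrightarrow> g \<in> ar \<Longrightarrow> src (f \<odot> g) = tob (src f) (src g)"
  and tn_tgt[simp]: "f \<in> ar \<Longrightarrow> g \<in> ar \<Longrightarrow> tgt (f \<odot> g) = tob (tgt f) (tgt g)"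
  using smc unfolding strict_smc_def mc_hom_def by auto

lemma tn_id: "a \<in> ob \<Longrightarrow> b \<in> ob \<Longrightarrow> idm a \<odot> idm b = idm (tob a b)"
  using smc unfolding strict_smc_def by auto

lemma interchange: "f \<in> ar \<Longrightarrow> g \<in> ar \<Longrightarrow> f' \<in> ar \<Longrightarrow> g' \<in> ar \<Longrightarrow>
   tgt f = src g \<Longrightarrow> tgt f' = src g' \<Longrightarrow> (g \<bullet> f) \<odot> (g' \<bullet> f') = (g \<odot> g') \<bullet> (f \<odot> f')"
proof -
  assume a: "f \<in> ar" "g \<in> ar" "f' \<in> ar" "g' \<in> ar" "tgt f = src g" "tgt f' = src g'"
  from smc have "\<forall>f g f' g'. f \<in> ar \<and> g \<in> ar \<and> f' \<in> ar \<and> g' \<in> ar \<and>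
        tgt f = src g \<and> tgt f' = src g' \<longrightarrow>
        (g \<bullet> f) \<odot> (g' \<bullet> f') = (g \<odot> g') \<bullet> (f \<odot> f')"
    unfolding strict_smc_def by (elim conjE) assumption
  then show ?thesis using a by blast
qed

lemma U_ob[simp]: "U \<in> ob"
  using smc unfolding strict_smc_def by auto

lemma tob_assoc[simp]: "a \<in> ob \<Longrightarrow> b \<in> ob \<Longrightarrow> c \<in> ob \<Longrightarrow> tob (tob a b) c = tob a (tob b c)"
  using smc unfolding strict_smc_def by auto

lemma tob_U[simp]: "a \<in> ob \<Longrightarrow> tob U a = a" "a \<in> ob \<Longrightarrow> tob a U = a"
  using smc unfolding strict_smc_def by auto

lemma tn_assoc[simp]: "f \<in> ar \<Longrightarrow> g \<in> ar \<Longrightarrow> h \<in> ar \<Longrightarrow> (f \<odot> g) \<odot> h = f \<odot> (g \<odot> h)"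
  using smc unfolding strict_smc_def by auto

lemma tn_U[simp]: "f \<in> ar \<Longrightarrow> idm U \<odot> f = f" "f \<in> ar \<Longrightarrow> f \<odot> idm U = f"
  using smc unfolding strict_smc_def by auto


lemma cp_assoc_r[simp]: "f \<in> ar \<Longrightarrow> g \<in> ar \<Longrightarrow> h \<in> ar \<Longrightarrow> tgt f = src g \<Longrightarrow> tgt g = src h \<Longrightarrow>
   (h \<bullet> g) \<bullet> f = h \<bullet> (g \<bullet> f)"
  by (rule cp_assoc)

lemma id_l'[simp]: "f \<in> ar \<Longrightarrow> tgt f = a \<Longrightarrow> idm a \<bullet> f = f"
  and id_r'[simp]: "f \<in> ar \<Longrightarrow> src f = a \<Longrightarrow> f \<bullet> idm a = f"
  by (rule id_l id_r; assumption)+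

lemma id_l2[simp]: "f \<in> ar \<Longrightarrow> a \<in> ob \<Longrightarrow> b \<in> ob \<Longrightarrow> tgt f = tob a b \<Longrightarrow> (idm a \<odot> idm b) \<bullet> f = f"
  and id_r2[simp]: "f \<in> ar \<Longrightarrow> a \<in> ob \<Longrightarrow> b \<in> ob \<Longrightarrow> src f = tob a b \<Longrightarrow> f \<bullet> (idm a \<odot> idm b) = f"
  by (simp_all only: tn_id id_l' id_r')

lemma id_tob_tn[simp]: "a \<in> ob \<Longrightarrow> b \<in> ob \<Longrightarrow> f \<in> ar \<Longrightarrow> idm (tob a b) \<odot> f = idm a \<odot> (idm b \<odot> f)"
  by (simp only: tn_id[symmetric] tn_assoc id_ar)

lemma tn_id_tob[simp]: "a \<in> ob \<Longrightarrow> b \<in> ob \<Longrightarrow> f \<in> ar \<Longrightarrow> f \<odot> idm (tob a b) = f \<odot> (idm a \<odot> idm b)"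
  by (simp only: tn_id)

lemma wl: "a \<in> ob \<Longrightarrow> f \<in> ar \<Longrightarrow> g \<in> ar \<Longrightarrow> tgt f = src g \<Longrightarrow>
  idm a \<odot> (g \<bullet> f) = (idm a \<odot> g) \<bullet> (idm a \<odot> f)"
  using interchange[of "idm a" "idm a" f g] by simp

lemma wr: "a \<in> ob \<Longrightarrow> f \<in> ar \<Longrightarrow> g \<in> ar \<Longrightarrow> tgt f = src g \<Longrightarrow>
  (g \<bullet> f) \<odot> idm a = (g \<odot> idm a) \<bullet> (f \<odot> idm a)"
  using interchange[of f g "idm a" "idm a"] by simp

lemma split1: "f \<in> ar \<Longrightarrow> g \<in> ar \<Longrightarrow> f \<odot> g = (f \<odot> idm (tgt g)) \<bullet> (idm (src f) \<odot> g)"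
  using interchange[of "idm (src f)" f g "idm (tgt g)"] by simp

lemma split2: "f \<in> ar \<Longrightarrow> g \<in> ar \<Longrightarrow> f \<odot> g = (idm (tgt f) \<odot> g) \<bullet> (f \<odot> idm (src g))"
  using interchange[of f "idm (tgt f)" "idm (src g)" g] by simp

lemma scalar_tn: "a \<in> ar \<Longrightarrow> b \<in> ar \<Longrightarrow> src a = U \<Longrightarrow> tgt a = U \<Longrightarrow> src b = U \<Longrightarrow> tgt b = U \<Longrightarrow>
  a \<odot> b = a \<bullet> b"
  using split1[of a b] by simp

end


context smc begin

lemma ctx: "g \<bullet> f = k \<Longrightarrow> f \<in> ar \<Longrightarrow> g \<in> ar \<Longrightarrow> y \<in> ar \<Longrightarrow> tgt f = src g \<Longrightarrow> tgt y = src f \<Longrightarrow>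
  g \<bullet> (f \<bullet> y) = k \<bullet> y"
  by (metis cp_assoc)

lemma monoidD: assumes "is_monoid C H m u"
  shows "H \<in> ob" "m \<in> ar" "src m = tob H H" "tgt m = H" "u \<in> ar" "src u = U" "tgt u = H"
   "m \<bullet> (m \<odot> idm H) = m \<bullet> (idm H \<odot> m)" "m \<bullet> (u \<odot> idm H) = idm H" "m \<bullet> (idm H \<odot> u) = idm H"
  using assms unfolding is_monoid_def Let_def mc_hom_def by auto

lemma comonoidD: assumes "is_comonoid C H d e"
  shows "H \<in> ob" "d \<in> ar" "src d = H" "tgt d = tob H H" "e \<in> ar" "src e = H" "tgt e = U"
   "(d \<odot> idm H) \<bullet> d = (idm H \<odot> d) \<bullet> d" "(e \<odot> idm H) \<bullet> d = idm H" "(idm H \<odot> e) \<bullet> d = idm H"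
  using assms unfolding is_comonoid_def Let_def mc_hom_def by auto

lemma frobD: assumes "is_frobenius C H m u d e"
  shows "is_monoid C H m u" "is_comonoid C H d e"
    "(idm H \<odot> m) \<bullet> (d \<odot> idm H) = d \<bullet> m" "d \<bullet> m = (m \<odot> idm H) \<bullet> (idm H \<odot> d)"
  using assms unfolding is_frobenius_def Let_def by auto

lemma hopfD: assumes "is_hopf C H m u d e s"
  shows "is_monoid C H m u" "is_comonoid C H d e" "s \<in> ar" "src s = H" "tgt s = H"
    "d \<bullet> u = u \<odot> u" "e \<bullet> m = e \<odot> e" "e \<bullet> u = idm U"
    "(m \<bullet> (s \<odot> idm H)) \<bullet> d = u \<bullet> e" "(m \<bullet> (idm H \<odot> s)) \<bullet> d = u \<bullet> e"
  using assms unfolding is_hopf_def Let_def mc_hom_def by auto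

lemma frob_snakeA: assumes F: "is_frobenius C H m u d e"
  shows "(idm H \<odot> (e \<bullet> m)) \<bullet> ((d \<bullet> u) \<odot> idm H) = idm H"
proof -
  note M = monoidD[OF frobD(1)[OF F]] and D = comonoidD[OF frobD(2)[OF F]]
  note [simp] = M(1-7) D(1-7)
  have "(idm H \<odot> (e \<bullet> m)) \<bullet> ((d \<bullet> u) \<odot> idm H)
      = (idm H \<odot> e) \<bullet> ((idm H \<odot> m) \<bullet> (d \<odot> idm H)) \<bullet> (u \<odot> idm H)"
    by (simp add: wl wr)
  also have "\<dots> = (idm H \<odot> e) \<bullet> (d \<bullet> m) \<bullet> (u \<odot> idm H)" by (simp add: frobD(3)[OF F])
  also have "\<dots> = ((idm H \<odot> e) \<bullet> d) \<bullet> (m \<bullet> (u \<odot> idm H))" by simp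
  also have "\<dots> = idm H" by (simp add: M D)
  finally show ?thesis .
qed

lemma frob_snakeB: assumes F: "is_frobenius C H m u d e"
  shows "((e \<bullet> m) \<odot> idm H) \<bullet> (idm H \<odot> (d \<bullet> u)) = idm H"
proof -
  note M = monoidD[OF frobD(1)[OF F]] and D = comonoidD[OF frobD(2)[OF F]]
  note [simp] = M(1-7) D(1-7)
  have "((e \<bullet> m) \<odot> idm H) \<bullet> (idm H \<odot> (d \<bullet> u))
      = (e \<odot> idm H) \<bullet> ((m \<odot> idm H) \<bullet> (idm H \<odot> d)) \<bullet> (idm H \<odot> u)"
    by (simp add: wl wr)
  also have "\<dots> = (e \<odot> idm H) \<bullet> (d \<bullet> m) \<bullet> (idm H \<odot> u)" by (simp add: frobD(4)[OF F])
  also have "\<dots> = ((e \<odot> idm H) \<bullet> d) \<bullet> (m \<bullet> (idm H \<odot> u))" by simp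
  also have "\<dots> = idm H" by (simp add: M D)
  finally show ?thesis .
qed

lemma frob_mform: assumes F: "is_frobenius C H m u d e"
  shows "m = (idm H \<odot> (e \<bullet> m)) \<bullet> (d \<odot> idm H)"
proof -
  note M = monoidD[OF frobD(1)[OF F]] and D = comonoidD[OF frobD(2)[OF F]]
  note [simp] = M(1-7) D(1-7)
  have "(idm H \<odot> (e \<bullet> m)) \<bullet> (d \<odot> idm H) = (idm H \<odot> e) \<bullet> ((idm H \<odot> m) \<bullet> (d \<odot> idm H))"
    by (simp add: wl)
  also have "\<dots> = ((idm H \<odot> e) \<bullet> d) \<bullet> m" by (simp add: frobD(3)[OF F])
  also have "\<dots> = m" by (simp add: D)
  finally show ?thesis by simp
qed

lemma frob_dform: assumes F: "is_frobenius C H m u d e"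
  shows "d = (m \<odot> idm H) \<bullet> (idm H \<odot> (d \<bullet> u))"
proof -
  note M = monoidD[OF frobD(1)[OF F]] and D = comonoidD[OF frobD(2)[OF F]]
  note [simp] = M(1-7) D(1-7)
  have "(m \<odot> idm H) \<bullet> (idm H \<odot> (d \<bullet> u)) = ((m \<odot> idm H) \<bullet> (idm H \<odot> d)) \<bullet> (idm H \<odot> u)"
    by (simp add: wl)
  also have "\<dots> = d \<bullet> (m \<bullet> (idm H \<odot> u))" by (simp add: frobD(4)[OF F, symmetric])
  also have "\<dots> = d" by (simp add: M)
  finally show ?thesis by simp
qed

lemma hopf_s_u: assumes Hp: "is_hopf C H m u d e s" shows "s \<bullet> u = u"
proof -
  note M = monoidD[OF hopfD(1)[OF Hp]] and D = comonoidD[OF hopfD(2)[OF Hp]]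
  note [simp] = M(1-7) D(1-7) hopfD(3-5)[OF Hp]
  have "u = (u \<bullet> e) \<bullet> u" by (simp add: hopfD(8)[OF Hp])
  also have "\<dots> = ((m \<bullet> (s \<odot> idm H)) \<bullet> d) \<bullet> u" by (simp only: hopfD(9)[OF Hp])
  also have "\<dots> = m \<bullet> (s \<odot> idm H) \<bullet> (u \<odot> u)" by (simp add: hopfD(6)[OF Hp])
  also have "(s \<odot> idm H) \<bullet> (u \<odot> u) = (s \<bullet> u) \<odot> u" by (simp add: interchange[symmetric])
  also have "(s \<bullet> u) \<odot> u = (idm H \<odot> u) \<bullet> (s \<bullet> u)"
    using split2[of "s \<bullet> u" u] by simp
  also have "m \<bullet> (idm H \<odot> u) \<bullet> (s \<bullet> u) = s \<bullet> u" 
    using ctx[OF M(10)] by simp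
  finally show ?thesis by simp
qed


lemma hfD: assumes "hopf_frobenius C H mu eta dg eg mur etar Delta eps s"
  shows "is_frobenius C H mu eta dg eg" "is_frobenius C H mur etar Delta eps"
    "is_hopf C H mu eta Delta eps s"
    "s = (idm H \<odot> (eps \<bullet> mur)) \<bullet> ((dg \<bullet> eta) \<odot> idm H)"
    "is_hopf C H mur etar dg eg (((eg \<bullet> mu) \<odot> idm H) \<bullet> (idm H \<odot> (Delta \<bullet> etar)))"
  using assms unfolding hopf_frobenius_def pre_hopf_frobenius_def Let_def by auto

lemma er_form: assumes hf: "hopf_frobenius C H mu eta dg eg mur etar Delta eps s"
  shows "eps \<bullet> mur = eg \<bullet> mu \<bullet> (idm H \<odot> s)"
proof -
  note G = frobD[OF hfD(1)[OF hf]] and R = frobD[OF hfD(2)[OF hf]]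
  note [simp] = monoidD[OF G(1)] comonoidD[OF G(2)] monoidD[OF R(1)] comonoidD[OF R(2)]
     hopfD(3-5)[OF hfD(3)[OF hf]]
  have sn: "((eg \<bullet> mu) \<odot> idm H) \<bullet> (idm H \<odot> (dg \<bullet> eta)) = idm H" by (rule frob_snakeB[OF hfD(1)[OF hf]])
  have a: "(eg \<bullet> mu) \<odot> (eps \<bullet> mur) = eg \<bullet> mu \<bullet> (idm H \<odot> (idm H \<odot> (eps \<bullet> mur)))"
    using split1[of "eg \<bullet> mu" "eps \<bullet> mur"] by simp
  have b: "(eg \<bullet> mu) \<odot> (eps \<bullet> mur) = eps \<bullet> mur \<bullet> ((eg \<bullet> mu) \<odot> (idm H \<odot> idm H))"
    using split2[of "eg \<bullet> mu" "eps \<bullet> mur"] by simp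
  have c: "((eg \<bullet> mu) \<odot> (idm H \<odot> idm H)) \<bullet> (idm H \<odot> ((dg \<bullet> eta) \<odot> idm H)) = idm H \<odot> idm H"
  proof -
    have "(((eg \<bullet> mu) \<odot> idm H) \<bullet> (idm H \<odot> (dg \<bullet> eta))) \<odot> (idm H \<bullet> idm H) =
       (((eg \<bullet> mu) \<odot> idm H) \<odot> idm H) \<bullet> ((idm H \<odot> (dg \<bullet> eta)) \<odot> idm H)" by (rule interchange) simp_all
    then show ?thesis using sn by simp
  qed
  have "eg \<bullet> mu \<bullet> (idm H \<odot> s) = eg \<bullet> mu \<bullet> (idm H \<odot> (idm H \<odot> (eps \<bullet> mur))) \<bullet> (idm H \<odot> ((dg \<bullet> eta) \<odot> idm H))"
    by (subst hfD(4)[OF hf]) (simp add: wl)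
  also have "\<dots> = ((eg \<bullet> mu) \<odot> (eps \<bullet> mur)) \<bullet> (idm H \<odot> ((dg \<bullet> eta) \<odot> idm H))"
    using a by simp
  also have "\<dots> = eps \<bullet> mur \<bullet> (((eg \<bullet> mu) \<odot> (idm H \<odot> idm H)) \<bullet> (idm H \<odot> ((dg \<bullet> eta) \<odot> idm H)))"
    using b by simp
  also have "\<dots> = eps \<bullet> mur" by (simp only: c) simp
  finally show ?thesis by simp
qed


lemma frob_mform2: assumes F: "is_frobenius C H m u d e"
  shows "m = ((e \<bullet> m) \<odot> idm H) \<bullet> (idm H \<odot> d)"
proof -
  note M = monoidD[OF frobD(1)[OF F]] and D = comonoidD[OF frobD(2)[OF F]]
  note [simp] = M(1-7) D(1-7)
  have "((e \<bullet> m) \<odot> idm H) \<bullet> (idm H \<odot> d) = (e \<odot> idm H) \<bullet> ((m \<odot> idm H) \<bullet> (idm H \<odot> d))"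
    by (simp add: wr)
  also have "\<dots> = ((e \<odot> idm H) \<bullet> d) \<bullet> m" by (simp add: frobD(4)[OF F, symmetric])
  also have "\<dots> = m" by (simp add: D)
  finally show ?thesis by simp
qed

lemma nondeg:
  assumes sn: "(idm H \<odot> e) \<bullet> (d \<odot> idm H) = idm H"
    and t: "H \<in> ob" "e \<in> ar" "src e = tob H H" "tgt e = U" "d \<in> ar" "src d = U" "tgt d = tob H H"
       "z \<in> ar" "src z = H" "tgt z = H"
  shows "z = (idm H \<odot> (e \<bullet> (idm H \<odot> z))) \<bullet> (d \<odot> idm H)"
proof -
  note [simp] = t
  have a: "d \<odot> z = (d \<odot> idm H) \<bullet> z" using split1[of d z] by simp
  have b: "d \<odot> z = (idm H \<odot> (idm H \<odot> z)) \<bullet> (d \<odot> idm H)" using split2[of d z] by simp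
  have "z = ((idm H \<odot> e) \<bullet> (d \<odot> idm H)) \<bullet> z" using sn by simp
  also have "\<dots> = (idm H \<odot> e) \<bullet> (d \<odot> z)" using a by simp
  also have "\<dots> = (idm H \<odot> e) \<bullet> (idm H \<odot> (idm H \<odot> z)) \<bullet> (d \<odot> idm H)" using b by simp
  also have "\<dots> = (idm H \<odot> (e \<bullet> (idm H \<odot> z))) \<bullet> (d \<odot> idm H)" by (simp add: wl)
  finally show ?thesis .
qed

lemma dg_form: assumes hf: "hopf_frobenius C H mu eta dg eg mur etar Delta eps s"
  shows "dg \<bullet> eta = (s \<odot> idm H) \<bullet> Delta \<bullet> etar"
proof -
  note G = frobD[OF hfD(1)[OF hf]] and R = frobD[OF hfD(2)[OF hf]]
  note [simp] = monoidD[OF G(1)] comonoidD[OF G(2)] monoidD[OF R(1)] comonoidD[OF R(2)]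
     hopfD(3-5)[OF hfD(3)[OF hf]]
  have sn: "((eps \<bullet> mur) \<odot> idm H) \<bullet> (idm H \<odot> (Delta \<bullet> etar)) = idm H" by (rule frob_snakeB[OF hfD(2)[OF hf]])
  have a: "(dg \<bullet> eta) \<odot> (Delta \<bullet> etar) = ((dg \<bullet> eta) \<odot> (idm H \<odot> idm H)) \<bullet> Delta \<bullet> etar"
    using split1[of "dg \<bullet> eta" "Delta \<bullet> etar"] by simp
  have b: "(dg \<bullet> eta) \<odot> (Delta \<bullet> etar) = (idm H \<odot> (idm H \<odot> (Delta \<bullet> etar))) \<bullet> dg \<bullet> eta"
    using split2[of "dg \<bullet> eta" "Delta \<bullet> etar"] by simp
  have c: "(idm H \<odot> ((eps \<bullet> mur) \<odot> idm H)) \<bullet> (idm H \<odot> (idm H \<odot> (Delta \<bullet> etar))) = idm H \<odot> idm H"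
  proof -
    have "idm H \<odot> (((eps \<bullet> mur) \<odot> idm H) \<bullet> (idm H \<odot> (Delta \<bullet> etar))) = 
      (idm H \<odot> ((eps \<bullet> mur) \<odot> idm H)) \<bullet> (idm H \<odot> (idm H \<odot> (Delta \<bullet> etar)))"
      by (rule wl) simp_all
    then show ?thesis using sn by simp
  qed
  have "(s \<odot> idm H) \<bullet> Delta \<bullet> etar = 
     (((idm H \<odot> (eps \<bullet> mur)) \<bullet> ((dg \<bullet> eta) \<odot> idm H)) \<odot> idm H) \<bullet> Delta \<bullet> etar"
    by (subst hfD(4)[OF hf]) simp
  also have "\<dots> = (idm H \<odot> ((eps \<bullet> mur) \<odot> idm H)) \<bullet> ((dg \<bullet> eta) \<odot> (idm H \<odot> idm H)) \<bullet> Delta \<bullet> etar"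
  proof -
    have "((idm H \<odot> (eps \<bullet> mur)) \<bullet> ((dg \<bullet> eta) \<odot> idm H)) \<odot> (idm H \<bullet> idm H) =
      ((idm H \<odot> (eps \<bullet> mur)) \<odot> idm H) \<bullet> (((dg \<bullet> eta) \<odot> idm H) \<odot> idm H)"
      by (rule interchange) simp_all
    then show ?thesis by simp
  qed
  also have "\<dots> = (idm H \<odot> ((eps \<bullet> mur) \<odot> idm H)) \<bullet> ((dg \<bullet> eta) \<odot> (Delta \<bullet> etar))"
    using a by simp
  also have "\<dots> = (idm H \<odot> ((eps \<bullet> mur) \<odot> idm H)) \<bullet> (idm H \<odot> (idm H \<odot> (Delta \<bullet> etar))) \<bullet> dg \<bullet> eta"
    using b by simp
  also have "\<dots> = dg \<bullet> eta" using ctx[OF c] by simp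
  finally show ?thesis by simp
qed

lemma er_eta: assumes hf: "hopf_frobenius C H mu eta dg eg mur etar Delta eps s"
  shows "eps \<bullet> mur \<bullet> (idm H \<odot> eta) = eg"
proof -
  note G = frobD[OF hfD(1)[OF hf]] and R = frobD[OF hfD(2)[OF hf]]
  note [simp] = monoidD[OF G(1)] comonoidD[OF G(2)] monoidD[OF R(1)] comonoidD[OF R(2)]
     hopfD(3-5)[OF hfD(3)[OF hf]]
  have a: "(idm H \<odot> s) \<bullet> (idm H \<odot> eta) = idm H \<odot> eta"
    using wl[of H eta s] hopf_s_u[OF hfD(3)[OF hf]] by simp
  have "eps \<bullet> mur \<bullet> (idm H \<odot> eta) = (eg \<bullet> mu \<bullet> (idm H \<odot> s)) \<bullet> (idm H \<odot> eta)"
    using ctx[OF er_form[OF hf, symmetric]] by simp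
  also have "\<dots> = eg" using a by simp
  finally show ?thesis .
qed

lemma integral: assumes hf: "hopf_frobenius C H mu eta dg eg mur etar Delta eps s"
  shows "(idm H \<odot> eg) \<bullet> Delta = eta \<bullet> eg"
proof -
  note G = frobD[OF hfD(1)[OF hf]] and R = frobD[OF hfD(2)[OF hf]]
  note [simp] = monoidD[OF G(1)] comonoidD[OF G(2)] monoidD[OF R(1)] comonoidD[OF R(2)]
     hopfD(3-5)[OF hfD(3)[OF hf]]
  note H2 = hopfD[OF hfD(5)[OF hf]]
  have sn: "(idm H \<odot> (eps \<bullet> mur)) \<bullet> ((Delta \<bullet> etar) \<odot> idm H) = idm H"
    by (rule frob_snakeA[OF hfD(2)[OF hf]])
  have mf: "mur = ((eps \<bullet> mur) \<odot> idm H) \<bullet> (idm H \<odot> Delta)" by (rule frob_mform2[OF hfD(2)[OF hf]])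
  have a: "(eps \<bullet> mur) \<odot> eg = eps \<bullet> mur \<bullet> (idm H \<odot> (idm H \<odot> eg))"
    using split1[of "eps \<bullet> mur" eg] by simp
  have b: "(eps \<bullet> mur) \<odot> eg = eg \<bullet> ((eps \<bullet> mur) \<odot> idm H)"
    using split2[of "eps \<bullet> mur" eg] by simp
  have c: "eg \<odot> eg = eg \<bullet> (idm H \<odot> eg)"
    using split1[of eg eg] by simp
  have z: "eps \<bullet> mur \<bullet> (idm H \<odot> ((idm H \<odot> eg) \<bullet> Delta)) = eg \<odot> eg"
  proof -
    have "eps \<bullet> mur \<bullet> (idm H \<odot> ((idm H \<odot> eg) \<bullet> Delta)) = eps \<bullet> mur \<bullet> (idm H \<odot> (idm H \<odot> eg)) \<bullet> (idm H \<odot> Delta)"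
      by (simp add: wl)
    also have "\<dots> = ((eps \<bullet> mur) \<odot> eg) \<bullet> (idm H \<odot> Delta)" using a by simp
    also have "\<dots> = eg \<bullet> ((eps \<bullet> mur) \<odot> idm H) \<bullet> (idm H \<odot> Delta)" using b by simp
    also have "\<dots> = eg \<bullet> mur" using mf by simp
    also have "\<dots> = eg \<odot> eg" using H2(7) by simp
    finally show ?thesis .
  qed
  have w: "eps \<bullet> mur \<bullet> (idm H \<odot> (eta \<bullet> eg)) = eg \<odot> eg"
  proof -
    have "eps \<bullet> mur \<bullet> (idm H \<odot> (eta \<bullet> eg)) = (eps \<bullet> mur \<bullet> (idm H \<odot> eta)) \<bullet> (idm H \<odot> eg)"
      by (simp add: wl)
    also have "\<dots> = eg \<odot> eg" using er_eta[OF hf] c by simp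
    finally show ?thesis .
  qed
  have "(idm H \<odot> eg) \<bullet> Delta = (idm H \<odot> ((eps \<bullet> mur) \<bullet> (idm H \<odot> ((idm H \<odot> eg) \<bullet> Delta)))) \<bullet> ((Delta \<bullet> etar) \<odot> idm H)"
    by (rule nondeg[OF sn]) simp_all
  also have "\<dots> = (idm H \<odot> ((eps \<bullet> mur) \<bullet> (idm H \<odot> (eta \<bullet> eg)))) \<bullet> ((Delta \<bullet> etar) \<odot> idm H)"
    using z w by simp
  also have "\<dots> = eta \<bullet> eg"
    by (rule nondeg[OF sn, symmetric]) simp_all
  finally show ?thesis .
qed


lemma scal_r: "g \<in> ar \<Longrightarrow> f \<in> ar \<Longrightarrow> l \<in> ar \<Longrightarrow> tgt f = src g \<Longrightarrow> src l = U \<Longrightarrow> tgt l = U \<Longrightarrow>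
   (g \<odot> l) \<bullet> f = (g \<bullet> f) \<odot> l"
  using interchange[of f g "idm U" l] by simp

lemma scal_l: "g \<in> ar \<Longrightarrow> f \<in> ar \<Longrightarrow> l \<in> ar \<Longrightarrow> tgt f = src g \<Longrightarrow> src l = U \<Longrightarrow> tgt l = U \<Longrightarrow>
   g \<bullet> (f \<odot> l) = (g \<bullet> f) \<odot> l"
  using interchange[of f g l "idm U"] by simp

lemma uniqA:
  assumes hf: "hopf_frobenius C H mu eta dg eg mur etar Delta eps s"
    and hf': "hopf_frobenius C H mu eta dg' eg' mur' etar' Delta eps s"
  shows "eg' = eg \<odot> (eg' \<bullet> etar)"
proof -
  note G = frobD[OF hfD(1)[OF hf]] and R = frobD[OF hfD(2)[OF hf]]
  note G' = frobD[OF hfD(1)[OF hf']] and R' = frobD[OF hfD(2)[OF hf']]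
  note C' = comonoidD[OF G'(2)]
  note [simp] = monoidD[OF G(1)] comonoidD[OF G(2)] monoidD[OF R(1)] comonoidD[OF R(2)]
     hopfD(3-5)[OF hfD(3)[OF hf]] C'(2-7)
  have mf: "mur = ((eps \<bullet> mur) \<odot> idm H) \<bullet> (idm H \<odot> Delta)" by (rule frob_mform2[OF hfD(2)[OF hf]])
  have int': "(idm H \<odot> eg') \<bullet> Delta = eta \<bullet> eg'" by (rule integral[OF hf'])
  have a: "(eps \<bullet> mur) \<odot> eg' = eg' \<bullet> ((eps \<bullet> mur) \<odot> idm H)"
    using split2[of "eps \<bullet> mur" eg'] by simp
  have b: "(eps \<bullet> mur) \<odot> eg' = eps \<bullet> mur \<bullet> (idm H \<odot> (idm H \<odot> eg'))"
    using split1[of "eps \<bullet> mur" eg'] by simp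
  have c: "eg \<odot> eg' = eg \<bullet> (idm H \<odot> eg')"
    using split1[of eg eg'] by simp
  have "eg' \<bullet> mur = eg' \<bullet> (((eps \<bullet> mur) \<odot> idm H) \<bullet> (idm H \<odot> Delta))"
    by (rule arg_cong[where f="\<lambda>x. eg' \<bullet> x", OF mf])
  also have "\<dots> = ((eps \<bullet> mur) \<odot> eg') \<bullet> (idm H \<odot> Delta)" using a by simp
  also have "\<dots> = eps \<bullet> mur \<bullet> (idm H \<odot> (idm H \<odot> eg')) \<bullet> (idm H \<odot> Delta)" using b by simp
  also have "\<dots> = eps \<bullet> mur \<bullet> (idm H \<odot> ((idm H \<odot> eg') \<bullet> Delta))" by (simp add: wl)
  also have "\<dots> = eps \<bullet> mur \<bullet> (idm H \<odot> (eta \<bullet> eg'))" by (simp only: int')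
  also have "\<dots> = (eps \<bullet> mur \<bullet> (idm H \<odot> eta)) \<bullet> (idm H \<odot> eg')" by (simp add: wl)
  also have "\<dots> = eg \<odot> eg'" using er_eta[OF hf] c by simp
  finally have m: "eg' \<bullet> mur = eg \<odot> eg'" .
  have "eg' = (eg' \<bullet> mur) \<bullet> (idm H \<odot> etar)" by simp
  also have "\<dots> = (eg \<odot> eg') \<bullet> (idm H \<odot> etar)" by (simp only: m)
  also have "\<dots> = (eg \<bullet> idm H) \<odot> (eg' \<bullet> etar)" by (rule interchange[symmetric]) simp_all
  also have "\<dots> = eg \<odot> (eg' \<bullet> etar)" by simp
  finally show ?thesis .
qed


lemma uniq_main:
  assumes hf: "hopf_frobenius C H mu eta dg eg mur etar Delta eps s"
    and hf': "hopf_frobenius C H mu eta dg' eg' mur' etar' Delta eps s"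
  shows "(\<exists>l. invertible_scalar C l \<and> dg' = dg \<odot> l) \<and>
         (\<exists>l. invertible_scalar C l \<and> eg' = eg \<odot> l) \<and>
         (\<exists>l. invertible_scalar C l \<and> mur' = mur \<odot> l) \<and>
         (\<exists>l. invertible_scalar C l \<and> etar' = etar \<odot> l)"
proof -
  note G = frobD[OF hfD(1)[OF hf]] and R = frobD[OF hfD(2)[OF hf]]
  note G' = frobD[OF hfD(1)[OF hf']] and R' = frobD[OF hfD(2)[OF hf']]
  note M' = monoidD[OF R'(1)] and C' = comonoidD[OF G'(2)]
  note H2 = hopfD[OF hfD(5)[OF hf]] and H2' = hopfD[OF hfD(5)[OF hf']]
  note [simp] = monoidD[OF G(1)] comonoidD[OF G(2)] monoidD[OF R(1)] comonoidD[OF R(2)]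
     hopfD(3-5)[OF hfD(3)[OF hf]] C'(2-7) M'(2-7)
  define l where "l = eg' \<bullet> etar"
  define l' where "l' = eg \<bullet> etar'"
  have tl[simp]: "l \<in> ar" "src l = U" "tgt l = U" "l' \<in> ar" "src l' = U" "tgt l' = U"
    unfolding l_def l'_def by simp_all
  have A: "eg' = eg \<odot> l" unfolding l_def by (rule uniqA[OF hf hf'])
  have A': "eg = eg' \<odot> l'" unfolding l'_def by (rule uniqA[OF hf' hf])
  have S1: "l \<odot> l' = idm U"
  proof -
    have "idm U = eg \<bullet> etar" using H2(8) by simp
    also have "\<dots> = (eg' \<odot> l') \<bullet> etar" using A' by simp
    also have "\<dots> = l \<odot> l'" unfolding l_def by (rule scal_r) simp_all
    finally show ?thesis by simp
  qed
  have S2: "l' \<odot> l = idm U"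
  proof -
    have "idm U = eg' \<bullet> etar'" using H2'(8) by simp
    also have "\<dots> = (eg \<odot> l) \<bullet> etar'" using A by simp
    also have "\<dots> = l' \<odot> l" unfolding l'_def by (rule scal_r) simp_all
    finally show ?thesis by simp
  qed
  have ll: "l \<bullet> l' = idm U" "l' \<bullet> l = idm U" using S1 S2 scalar_tn[of l l'] scalar_tn[of l' l] by simp_all
  have inv: "invertible_scalar C l" "invertible_scalar C l'"
    unfolding invertible_scalar_def mc_hom_def
    by (simp_all add: ll) (rule exI[of _ l'], simp add: ll, rule exI[of _ l], simp add: ll)
  have Cr: "eps \<bullet> mur' = (eps \<bullet> mur) \<odot> l"
  proof -
    have "eps \<bullet> mur' = eg' \<bullet> mu \<bullet> (idm H \<odot> s)" by (rule er_form[OF hf'])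
    also have "\<dots> = (eg \<odot> l) \<bullet> (mu \<bullet> (idm H \<odot> s))" using A by simp
    also have "\<dots> = (eg \<bullet> mu \<bullet> (idm H \<odot> s)) \<odot> l" by (rule scal_r) simp_all
    also have "\<dots> = (eps \<bullet> mur) \<odot> l" using er_form[OF hf] by simp
    finally show ?thesis .
  qed
  have E: "mur' = mur \<odot> l"
  proof -
    have "mur' = (idm H \<odot> (eps \<bullet> mur')) \<bullet> (Delta \<odot> idm H)" by (rule frob_mform[OF hfD(2)[OF hf']])
    also have "\<dots> = (idm H \<odot> ((eps \<bullet> mur) \<odot> l)) \<bullet> (Delta \<odot> idm H)" using Cr by simp
    also have "\<dots> = ((idm H \<odot> (eps \<bullet> mur)) \<bullet> (Delta \<odot> idm H)) \<odot> l"
      using scal_r[of "idm H \<odot> (eps \<bullet> mur)" "Delta \<odot> idm H" l] by simp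
    also have "\<dots> = mur \<odot> l" using frob_mform[OF hfD(2)[OF hf]] by simp
    finally show ?thesis .
  qed
  have D: "etar = etar' \<odot> l"
  proof -
    have u': "mur' \<bullet> (etar' \<odot> idm H) = idm H" using M'(9) .
    have "etar = mur' \<bullet> (etar' \<odot> etar)"
      using split1[of etar' etar] ctx[OF u', of etar] by simp
    also have "\<dots> = (mur \<bullet> (etar' \<odot> etar)) \<odot> l" using E scal_r[of mur "etar' \<odot> etar" l] by simp
    also have "mur \<bullet> (etar' \<odot> etar) = etar'" using split2[of etar' etar] ctx[OF monoidD(10)[OF R(1)], of etar'] by simp
    finally show ?thesis .
  qed
  have F: "etar' = etar \<odot> l'"
  proof -
    have "etar \<odot> l' = etar' \<odot> (l \<odot> l')" using D by simp
    then show ?thesis using S1 by simp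
  qed
  have Gd: "dg' = dg \<odot> l'"
  proof -
    have d1: "Delta \<bullet> etar' = (Delta \<bullet> etar) \<odot> l'" using F scal_l[of Delta etar l'] by simp
    have "dg' \<bullet> eta = (s \<odot> idm H) \<bullet> Delta \<bullet> etar'" by (rule dg_form[OF hf'])
    also have "\<dots> = ((s \<odot> idm H) \<bullet> Delta \<bullet> etar) \<odot> l'"
      using d1 scal_l[of "s \<odot> idm H" "Delta \<bullet> etar" l'] by simp
    also have "\<dots> = (dg \<bullet> eta) \<odot> l'" using dg_form[OF hf] by simp
    finally have d2: "dg' \<bullet> eta = (dg \<bullet> eta) \<odot> l'" .
    have "dg' = (mu \<odot> idm H) \<bullet> (idm H \<odot> (dg' \<bullet> eta))" by (rule frob_dform[OF hfD(1)[OF hf']])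
    also have "\<dots> = (mu \<odot> idm H) \<bullet> (idm H \<odot> ((dg \<bullet> eta) \<odot> l'))" using d2 by simp
    also have "\<dots> = ((mu \<odot> idm H) \<bullet> (idm H \<odot> (dg \<bullet> eta))) \<odot> l'"
      using scal_l[of "mu \<odot> idm H" "idm H \<odot> (dg \<bullet> eta)" l'] by simp
    also have "\<dots> = dg \<odot> l'" using frob_dform[OF hfD(1)[OF hf]] by simp
    finally show ?thesis .
  qed
  show ?thesis using inv A E F Gd by blast
qed

end

theorem mainTheorem5:
  assumes "strict_smc C"
    and "is_hopf C H mu eta Delta eps s"
    and "hopf_frobenius C H mu eta dg eg mur etar Delta eps s"
    and "hopf_frobenius C H mu eta dg' eg' mur' etar' Delta eps s"
  shows "(\<exists>l. invertible_scalar C l \<and> dg' = mc_tar C dg l) \<and>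
         (\<exists>l. invertible_scalar C l \<and> eg' = mc_tar C eg l) \<and>
         (\<exists>l. invertible_scalar C l \<and> mur' = mc_tar C mur l) \<and>
         (\<exists>l. invertible_scalar C l \<and> etar' = mc_tar C etar l)"
proof -
  interpret smc C by (rule smc.intro) (rule assms(1))
  show ?thesis by (rule uniq_main[OF assms(3) assms(4)])
qed

end
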